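(* Let $X$ have a pdf $f$ satisfying Conditions (A) and (B) below, and let $D>0$. Let $H^*(D)=\inf\{H[Q(X)]: D(Q)\le D\}$ and $A^*(D)=\inf\{\mathrm{AoI}(S_{\mathrm z},Q,F^* ): D(Q)\le D\}$, both infima taken over quantizers. Then $$\tfrac32 H^*(D)\le A^*(D),$$ and, for any $\delta>0$ with $D(Q_{\mathrm{uni}}^\delta)\le D$, $$A^*(D)\le \mathrm{AoI}(S_{\mathrm z},Q_{\mathrm{uni}}^\delta,F_{\mathrm s}).$$
   Context: Let $X$ be a real random variable with pdf $f$. Condition (A): $f$ is continuous and differentiable, and its support is a bounded interval $I$. Condition (B): $\int_I f\log_2^2 f\,dx$ and $-\int_I f\log_2 f\,dx$ exist and are finite. Quantizers. A quantizer $Q$ partitions $I$ into intervals $[a_{i-1},a_i]$ with representation points $c_i$. Write $p_i=P(X\in[a_{i-1},a_i])$. The output entropy is $H[Q(X)]=-\sum_ip_i\log_2p_i$, and the distortion is $D(Q)=\sum_i\int_{a_{i-1}}^{a_i}(x-c_i)^2f(x)\,dx$. The uniform quantizer $Q_{\mathrm{uni}}^\delta$ partitions $I$ into consecutive cells of length $\delta$, with midpoint representation points. Codes. A real-valued code assigns lengths $l_i\in\mathbb R^+$ to the cells, subject to $\sum_i2^{-l_i}\le1$. The random codeword length is $L=l_i$ when $X$ is in cell $i$. Objective. Under zero-wait sampling, $\mathrm{AoI}(S_{\mathrm z},Q,l)=\frac{E[L^2]}{2E[L]}+E[L]$, and $\mathrm{AoI}(S_{\mathrm z},Q,F^* )=\inf_l\mathrm{AoI}(S_{\mathrm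 z},Q,l)$, the infimum over real-valued codes. $F_{\mathrm s}$ denotes the real-valued Shannon code $l_i=-\log_2p_i$. *)

theory Defs
  imports "HOL-Analysis.Analysis"
begin

text \<open>A quantizer of the support interval [alpha, beta] with n cells is given by
  breakpoints a 0 = alpha < a 1 < ... < a n = beta; cell i (for i < n) is
  [a i, a (i+1)] with representation point c i.\<close>

definition is_quantizer :: "real \<Rightarrow> real \<Rightarrow> nat \<Rightarrow> (nat \<Rightarrow> real) \<Rightarrow> bool" where
  "is_quantizer alpha beta n a \<longleftrightarrow>
     n \<ge> 1 \<and> a 0 = alpha \<and> a n = beta \<and> (\<forall>i<n. a i < a (Suc i))"

definition cell_prob :: "(real \<Rightarrow> real) \<Rightarrow> (nat \<Rightarrow> real) \<Rightarrow> nat \<Rightarrow> real" where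
  "cell_prob f a i = integral {a i..a (Suc i)} f"

definition out_entropy :: "(real \<Rightarrow> real) \<Rightarrow> nat \<Rightarrow> (nat \<Rightarrow> real) \<Rightarrow> real" where
  "out_entropy f n a = - (\<Sum>i<n. cell_prob f a i * log 2 (cell_prob f a i))"

definition distortion :: "(real \<Rightarrow> real) \<Rightarrow> nat \<Rightarrow> (nat \<Rightarrow> real) \<Rightarrow> (nat \<Rightarrow> real) \<Rightarrow> real" where
  "distortion f n a c = (\<Sum>i<n. integral {a i..a (Suc i)} (\<lambda>x. (x - c i)^2 * f x))"

definition EL :: "(real \<Rightarrow> real) \<Rightarrow> nat \<Rightarrow> (nat \<Rightarrow> real) \<Rightarrow> (nat \<Rightarrow> real) \<Rightarrow> real" where
  "EL f n a l = (\<Sum>i<n. cell_prob f a i * l i)"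

definition EL2 :: "(real \<Rightarrow> real) \<Rightarrow> nat \<Rightarrow> (nat \<Rightarrow> real) \<Rightarrow> (nat \<Rightarrow> real) \<Rightarrow> real" where
  "EL2 f n a l = (\<Sum>i<n. cell_prob f a i * (l i)^2)"

definition aoi :: "(real \<Rightarrow> real) \<Rightarrow> nat \<Rightarrow> (nat \<Rightarrow> real) \<Rightarrow> (nat \<Rightarrow> real) \<Rightarrow> real" where
  "aoi f n a l = EL2 f n a l / (2 * EL f n a l) + EL f n a l"

definition real_code :: "nat \<Rightarrow> (nat \<Rightarrow> real) \<Rightarrow> bool" where
  "real_code n l \<longleftrightarrow> (\<forall>i<n. l i > 0) \<and> (\<Sum>i<n. 2 powr (- l i)) \<le> 1"

definition aoi_opt :: "(real \<Rightarrow> real) \<Rightarrow> nat \<Rightarrow> (nat \<Rightarrow> real) \<Rightarrow> real" where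
  "aoi_opt f n a = Inf {aoi f n a l | l. real_code n l}"

definition shannon_code :: "(real \<Rightarrow> real) \<Rightarrow> (nat \<Rightarrow> real) \<Rightarrow> nat \<Rightarrow> real" where
  "shannon_code f a i = - log 2 (cell_prob f a i)"

definition H_star :: "(real \<Rightarrow> real) \<Rightarrow> real \<Rightarrow> real \<Rightarrow> real \<Rightarrow> real" where
  "H_star f alpha beta D = Inf {out_entropy f n a | n a c.
      is_quantizer alpha beta n a \<and> distortion f n a c \<le> D}"

definition A_star :: "(real \<Rightarrow> real) \<Rightarrow> real \<Rightarrow> real \<Rightarrow> real \<Rightarrow> real" where
  "A_star f alpha beta D = Inf {aoi_opt f n a | n a c.
      is_quantizer alpha beta n a \<and> distortion f n a c \<le> D}"

definition uni_n :: "real \<Rightarrow> real \<Rightarrow> real \<Rightarrow> nat" where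
  "uni_n alpha beta delta = nat \<lceil>(beta - alpha) / delta\<rceil>"

definition uni_a :: "real \<Rightarrow> real \<Rightarrow> real \<Rightarrow> nat \<Rightarrow> real" where
  "uni_a alpha beta delta i = min (alpha + real i * delta) beta"

definition uni_c :: "real \<Rightarrow> real \<Rightarrow> real \<Rightarrow> nat \<Rightarrow> real" where
  "uni_c alpha beta delta i = (uni_a alpha beta delta i + uni_a alpha beta delta (Suc i)) / 2"

end

theory Submission
  imports Defs
begin

lemma mono_steps:
  fixes a :: "nat \<Rightarrow> real"
  assumes "\<forall>i<n. a i < a (Suc i)" "i \<le> j" "j \<le> n"
  shows "a i \<le> a j"
  using assms(2,3)
proof (induction j)
  case 0 then show ?case by simp
next
  case (Suc j)
  show ?case
  proof (cases "i = Suc j")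
    case True then show ?thesis by simp
  next
    case False
    then have "a i \<le> a j" using Suc by simp
    moreover have "a j < a (Suc j)" using assms(1) Suc.prems by simp
    ultimately show ?thesis by simp
  qed
qed

lemma sum_cells:
  fixes a :: "nat \<Rightarrow> real" and f :: "real \<Rightarrow> real"
  assumes "\<forall>i<m. a i \<le> a (Suc i)" "continuous_on {a 0..a m} f"
  shows "a 0 \<le> a m \<and> (\<Sum>i<m. integral {a i..a (Suc i)} f) = integral {a 0..a m} f"
  using assms
proof (induction m)
  case 0 then show ?case by simp
next
  case (Suc m)
  have st: "a m \<le> a (Suc m)" using Suc.prems by simp
  have IH: "a 0 \<le> a m \<and> (\<Sum>i<m. integral {a i..a (Suc i)} f) = integral {a 0..a m} f"
    apply (rule Suc.IH)
    using Suc.prems apply simp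
    apply (rule continuous_on_subset[OF Suc.prems(2)])
    using st by auto
  have int: "f integrable_on {a 0..a (Suc m)}"
    using Suc.prems(2) integrable_continuous_interval by blast
  have "integral {a 0..a m} f + integral {a m..a (Suc m)} f = integral {a 0..a (Suc m)} f"
    using Henstock_Kurzweil_Integration.integral_combine[OF _ st int] IH by blast
  then show ?case using IH st by simp
qed

lemma gibbs_term:
  fixes p l :: real
  assumes "p \<ge> 0"
  shows "p * l + p * log 2 p \<ge> (p - 2 powr (- l)) / ln 2"
proof (cases "p = 0")
  case True then show ?thesis by simp
next
  case False
  then have p: "p > 0" using assms by simp
  define x where "x = p * 2 powr l"
  have x: "x > 0" using p by (simp add: x_def)
  have "ln (1/x) \<le> 1/x - 1" using ln_le_minus_one x by simp
  then have lnx: "ln x \<ge> 1 - 1/x" using x by (simp add: ln_div)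
  have "log 2 x = log 2 p + l" using p by (simp add: x_def log_mult)
  then have "p * l + p * log 2 p = p * log 2 x" by (simp add: algebra_simps)
  also have "\<dots> = p * ln x / ln 2" by (simp add: log_def)
  also have "\<dots> \<ge> p * (1 - 1/x) / ln 2"
    using lnx p by (simp add: divide_right_mono mult_left_mono)
  also have "p * (1 - 1/x) = p - 2 powr (-l)"
    using p by (simp add: x_def field_simps powr_minus)
  finally show ?thesis by simp
qed

lemma aoi_bound:
  assumes nn: "\<forall>i<n. cell_prob f a i \<ge> 0" and s1: "(\<Sum>i<n. cell_prob f a i) = 1"
    and rc: "real_code n l"
  shows "3/2 * out_entropy f n a \<le> aoi f n a l" "0 \<le> out_entropy f n a"
proof -
  define P where "P = cell_prob f a"
  have nn': "\<And>i. i < n \<Longrightarrow> P i \<ge> 0" using nn P_def by simp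
  have s1': "(\<Sum>i<n. P i) = 1" using s1 P_def by simp
  have lpos: "\<And>i. i < n \<Longrightarrow> l i > 0" and kr: "(\<Sum>i<n. 2 powr (- l i)) \<le> 1"
    using rc by (auto simp: real_code_def)
  define m where "m = EL f n a l"
  have m_def': "m = (\<Sum>i<n. P i * l i)" by (simp add: m_def EL_def P_def)
  have e2: "EL2 f n a l = (\<Sum>i<n. P i * (l i)^2)" by (simp add: EL2_def P_def)
  obtain j where j: "j < n" "P j > 0"
  proof (rule ccontr)
    assume "\<not> thesis"
    then have "\<forall>i<n. P i \<le> 0" using that by force
    then have "(\<Sum>i<n. P i) \<le> 0" by (intro sum_nonpos) auto
    then show False using s1' by simp
  qed
  have "P j * l j \<le> (\<Sum>i<n. P i * l i)"
    by (rule member_le_sum) (use j nn' lpos in \<open>auto simp: less_imp_le\<close>)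
  moreover have "P j * l j > 0" using j lpos by simp
  ultimately have mpos: "m > 0" using m_def' by simp
  have "0 \<le> (\<Sum>i<n. P i * (l i - m)^2)" by (intro sum_nonneg) (use nn' in auto)
  also have "\<dots> = (\<Sum>i<n. P i * (l i)^2) - 2 * m * (\<Sum>i<n. P i * l i) + m^2 * (\<Sum>i<n. P i)"
    by (simp add: power2_eq_square algebra_simps sum.distrib sum_subtractf sum_distrib_left)
  finally have "m^2 \<le> EL2 f n a l" using e2 m_def' s1' by (simp add: power2_eq_square)
  then have "m^2 / (2*m) \<le> EL2 f n a l / (2*m)" using mpos by (intro divide_right_mono) auto
  then have A: "3/2 * m \<le> aoi f n a l" using mpos by (simp add: aoi_def m_def[symmetric] power2_eq_square)
  have "(\<Sum>i<n. (P i - 2 powr (- l i)) / ln 2) \<le> (\<Sum>i<n. P i * l i + P i * log 2 (P i))"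
    by (intro sum_mono gibbs_term) (use nn' in auto)
  moreover have "(\<Sum>i<n. (P i - 2 powr (- l i)) / ln 2) = (1 - (\<Sum>i<n. 2 powr (- l i))) / ln 2"
    by (simp add: sum_divide_distrib[symmetric] sum_subtractf s1')
  moreover have "(1 - (\<Sum>i<n. 2 powr (- l i))) / ln 2 \<ge> 0" using kr by simp
  ultimately have "0 \<le> (\<Sum>i<n. P i * l i) + (\<Sum>i<n. P i * log 2 (P i))"
    by (simp add: sum.distrib)
  then have "out_entropy f n a \<le> m" by (simp add: out_entropy_def m_def' P_def)
  then show "3/2 * out_entropy f n a \<le> aoi f n a l" using A by simp
  have "\<And>i. i < n \<Longrightarrow> P i \<le> 1"
  proof -
    fix i assume i: "i < n"
    have "P i \<le> (\<Sum>i<n. P i)" by (rule member_le_sum) (use i nn' in auto)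
    then show "P i \<le> 1" using s1' by simp
  qed
  then have "\<And>i. i < n \<Longrightarrow> P i * log 2 (P i) \<le> 0"
    using nn' by (metis less_eq_real_def log_le_zero_cancel_iff mult_nonneg_nonpos mult_zero_left one_less_numeral_iff semiring_norm(76) zero_less_one)
  then have "(\<Sum>i<n. P i * log 2 (P i)) \<le> 0" by (intro sum_nonpos) auto
  then show "0 \<le> out_entropy f n a" by (simp add: out_entropy_def P_def)
qed

lemma quant_cells:
  fixes f :: "real \<Rightarrow> real"
  assumes q: "is_quantizer alpha beta n a" and cont: "continuous_on {alpha..beta} f"
    and nn: "\<forall>x. f x \<ge> 0" and i: "i < n"
  shows "alpha \<le> a i" "a (Suc i) \<le> beta" "a i < a (Suc i)"
    "continuous_on {a i..a (Suc i)} f" "cell_prob f a i \<ge> 0"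
proof -
  have st: "\<forall>i<n. a i < a (Suc i)" "a 0 = alpha" "a n = beta" using q by (auto simp: is_quantizer_def)
  show 1: "alpha \<le> a i" using mono_steps[OF st(1), of 0 i] st i by simp
  show 2: "a (Suc i) \<le> beta" using mono_steps[OF st(1), of "Suc i" n] st i by simp
  show "a i < a (Suc i)" using st i by simp
  show c: "continuous_on {a i..a (Suc i)} f" by (rule continuous_on_subset[OF cont]) (use 1 2 in auto)
  show "cell_prob f a i \<ge> 0" unfolding cell_prob_def
    by (rule integral_nonneg) (use c integrable_continuous_interval nn in auto)
qed

lemma quant_sum:
  fixes f :: "real \<Rightarrow> real"
  assumes q: "is_quantizer alpha beta n a" and cont: "continuous_on {alpha..beta} f"
    and pdf_int: "integral {alpha..beta} f = 1"
  shows "(\<Sum>i<n. cell_prob f a i) = 1"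
proof -
  have st: "\<forall>i<n. a i < a (Suc i)" "a 0 = alpha" "a n = beta" using q by (auto simp: is_quantizer_def)
  have "(\<Sum>i<n. integral {a i..a (Suc i)} f) = integral {a 0..a n} f"
    using sum_cells[of n a f] st cont by (auto simp: less_imp_le)
  then show ?thesis using st pdf_int by (simp add: cell_prob_def)
qed

lemma cell_pos:
  fixes f :: "real \<Rightarrow> real"
  assumes q: "is_quantizer alpha beta n a" and cont: "continuous_on {alpha..beta} f"
    and nn: "\<forall>x. f x \<ge> 0" and i: "i < n"
    and support: "closure {x. f x \<noteq> 0} = {alpha..beta}"
  shows "cell_prob f a i > 0"
proof -
  note qc = quant_cells[OF q cont nn i]
  define u where "u = a i"
  define v where "v = a (Suc i)"
  have uv: "u < v" "alpha \<le> u" "v \<le> beta" using qc by (auto simp: u_def v_def)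
  have "(u+v)/2 \<in> closure {x. f x \<noteq> 0}" using support uv by simp
  then obtain y where y: "f y \<noteq> 0" "dist y ((u+v)/2) < (v-u)/2"
  proof -
    have "(v-u)/2 > 0" using uv by simp
    then show ?thesis using that \<open>(u+v)/2 \<in> closure {x. f x \<noteq> 0}\<close> unfolding closure_approachable by blast
  qed
  have yin: "y \<in> {u..v}" 
  proof -
    have "\<bar>y - (u+v)/2\<bar> < (v-u)/2" using y(2) by (simp add: dist_real_def)
    then have "-(v-u)/2 < y - (u+v)/2 \<and> y - (u+v)/2 < (v-u)/2" by (simp only: abs_less_iff) simp
    then show ?thesis by (simp add: field_simps; linarith)
  qed
  show ?thesis
  proof (rule ccontr)
    assume "\<not> ?thesis"
    then have z: "cell_prob f a i = 0" using qc by simp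
    have intg: "f integrable_on {u..v}" using qc integrable_continuous_interval u_def v_def by blast
    then have "(f has_integral integral {u..v} f) {u..v}" by (rule integrable_integral)
    then have "(f has_integral 0) (cbox u v)" using z by (simp add: cell_prob_def u_def v_def)
    then have "f y = 0"
      apply (rule has_integral_0_cbox_imp_0[rotated 2])
      using qc uv yin nn by (auto simp: u_def v_def)
    then show False using y by simp
  qed
qed

lemma exists_quant:
  fixes f :: "real \<Rightarrow> real"
  assumes I: "alpha < beta" and cont: "continuous_on {alpha..beta} f"
    and nn: "\<forall>x. f x \<ge> 0" and pdf_int: "integral {alpha..beta} f = 1" and D: "D > 0"
  shows "\<exists>n a c. is_quantizer alpha beta n a \<and> distortion f n a c \<le> D"
proof -
  obtain n :: nat where n: "(beta - alpha)^2 / D < real n" using reals_Archimedean2 by blast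
  have "(beta - alpha)^2 / D > 0" using I D by simp
  then have npos: "real n > 0" using n by linarith
  define w where "w = (beta - alpha) / n"
  define a where "a = (\<lambda>i::nat. alpha + real i * w)"
  have wpos: "w > 0" using npos I by (simp add: w_def)
  have q: "is_quantizer alpha beta n a"
  proof -
    have "a n = beta" using npos by (simp add: a_def w_def)
    moreover have "\<forall>i<n. a i < a (Suc i)" using wpos by (simp add: a_def algebra_simps)
    moreover have "n \<ge> 1" using npos by simp
    ultimately show ?thesis by (simp add: is_quantizer_def a_def)
  qed
  have "distortion f n a a \<le> (\<Sum>i<n. integral {a i..a (Suc i)} (\<lambda>x. w^2 * f x))"
    unfolding distortion_def
  proof (rule sum_mono)
    fix i assume i: "i \<in> {..<n}"
    note qc = quant_cells[OF q cont nn, of i]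
    have c: "continuous_on {a i..a (Suc i)} f" using qc i by simp
    show "integral {a i..a (Suc i)} (\<lambda>x. (x - a i)^2 * f x) \<le> integral {a i..a (Suc i)} (\<lambda>x. w^2 * f x)"
    proof (rule integral_le)
      show "(\<lambda>x. (x - a i)^2 * f x) integrable_on {a i..a (Suc i)}"
        by (rule integrable_continuous_interval) (intro continuous_intros c)
      show "(\<lambda>x. w^2 * f x) integrable_on {a i..a (Suc i)}"
        by (rule integrable_continuous_interval) (intro continuous_intros c)
      fix x assume x: "x \<in> {a i..a (Suc i)}"
      have "0 \<le> x - a i" "x - a i \<le> w" using x by (auto simp: a_def algebra_simps)
      then have "(x - a i)^2 \<le> w^2" by (intro power_mono) auto
      then show "(x - a i)^2 * f x \<le> w^2 * f x" using nn by (intro mult_right_mono) auto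
    qed
  qed
  also have "\<dots> = w^2 * (\<Sum>i<n. cell_prob f a i)"
    by (simp add: cell_prob_def sum_distrib_left)
  also have "\<dots> = w^2" using quant_sum[OF q cont pdf_int] by simp
  also have "w^2 \<le> (beta - alpha)^2 / n"
  proof -
    have "w^2 = (beta - alpha)^2 / n / n" by (simp add: w_def power2_eq_square)
    also have "\<dots> \<le> (beta - alpha)^2 / n"
    proof -
      have "real n \<ge> 1" using npos by simp
      moreover have "(beta - alpha)^2 \<ge> 0" by simp
      ultimately have "(beta - alpha)^2 * 1 \<le> (beta - alpha)^2 * real n" by (rule mult_left_mono)
      then show ?thesis using npos by (simp add: divide_le_eq)
    qed
    finally show ?thesis .
  qed
  also have "\<dots> < D" using n D npos by (simp add: divide_less_eq mult.commute)
  finally show ?thesis using q less_imp_le by blast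
qed

lemma code_exists:
  assumes "n \<ge> 1"
  shows "real_code n (\<lambda>_. log 2 (real n) + 1)"
proof -
  have lg: "log 2 (real n) \<ge> 0" using assms by simp
  have "2 powr (- (log 2 (real n) + 1)) = inverse (2 powr (log 2 (real n)) * 2 powr 1)"
    by (simp only: powr_minus powr_add)
  also have "\<dots> = 1 / (2 * real n)" using assms by (simp add: inverse_eq_divide)
  finally have "2 powr (- (log 2 (real n) + 1)) = 1 / (2 * real n)" .
  then have "(\<Sum>i<n. 2 powr (- (log 2 (real n) + 1))) = 1/2" using assms by simp
  then show ?thesis using lg by (simp add: real_code_def)
qed

lemma aoi_opt_facts:
  fixes f :: "real \<Rightarrow> real"
  assumes q: "is_quantizer alpha beta n a" and cont: "continuous_on {alpha..beta} f"
    and nn: "\<forall>x. f x \<ge> 0" and pdf_int: "integral {alpha..beta} f = 1"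
  shows "3/2 * out_entropy f n a \<le> aoi_opt f n a" "0 \<le> out_entropy f n a"
    "bdd_below {aoi f n a l | l. real_code n l}"
proof -
  have nn': "\<forall>i<n. cell_prob f a i \<ge> 0" using quant_cells[OF q cont nn] by blast
  have s1: "(\<Sum>i<n. cell_prob f a i) = 1" by (rule quant_sum[OF q cont pdf_int])
  have n1: "n \<ge> 1" using q by (simp add: is_quantizer_def)
  note ab = aoi_bound[OF nn' s1]
  show h0: "0 \<le> out_entropy f n a" using ab(2)[OF code_exists[OF n1]] .
  show "3/2 * out_entropy f n a \<le> aoi_opt f n a" unfolding aoi_opt_def
    by (rule cInf_greatest) (use code_exists[OF n1] ab(1) in auto)
  show "bdd_below {aoi f n a l | l. real_code n l}"
  proof (rule bdd_belowI[where m=0])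
    fix x assume "x \<in> {aoi f n a l | l. real_code n l}"
    then obtain l where "real_code n l" "x = aoi f n a l" by blast
    then show "0 \<le> x" using ab(1)[of l] h0 by simp
  qed
qed

lemma uni_quant:
  assumes I: "alpha < beta" and d: "delta > 0"
  shows "is_quantizer alpha beta (uni_n alpha beta delta) (uni_a alpha beta delta)"
proof -
  define r where "r = (beta - alpha) / delta"
  have r: "r > 0" using I d by (simp add: r_def)
  have n: "uni_n alpha beta delta = nat \<lceil>r\<rceil>" by (simp add: uni_n_def r_def)
  have n1: "nat \<lceil>r\<rceil> \<ge> 1" using r by linarith
  have "real (nat \<lceil>r\<rceil>) \<ge> r" using r by linarith
  then have "alpha + real (nat \<lceil>r\<rceil>) * delta \<ge> beta" using d by (simp add: r_def field_simps)
  then have an: "uni_a alpha beta delta (nat \<lceil>r\<rceil>) = beta" by (simp add: uni_a_def)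
  have st: "\<forall>i<nat \<lceil>r\<rceil>. uni_a alpha beta delta i < uni_a alpha beta delta (Suc i)"
  proof (intro allI impI)
    fix i assume i: "i < nat \<lceil>r\<rceil>"
    then have "int i < \<lceil>r\<rceil>" by linarith
    then have "real i < r" by (simp add: less_ceiling_iff)
    then have "alpha + real i * delta < beta" using d by (simp add: r_def field_simps)
    then show "uni_a alpha beta delta i < uni_a alpha beta delta (Suc i)"
      using d by (simp add: uni_a_def algebra_simps)
  qed
  show ?thesis unfolding is_quantizer_def n using n1 an st I by (simp add: uni_a_def)
qed

theorem lemma2:
  fixes f :: "real \<Rightarrow> real" and alpha beta D :: real
  assumes I: "alpha < beta"
    and pdf_nonneg: "\<forall>x. f x \<ge> 0"
    and pdf_int: "integral {alpha..beta} f = 1"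
    and outside: "\<forall>x. x \<notin> {alpha..beta} \<longrightarrow> f x = 0"
    and support: "closure {x. f x \<noteq> 0} = {alpha..beta}"
    and cont: "continuous_on {alpha..beta} f"
    and diff: "\<forall>x\<in>{alpha<..<beta}. f differentiable (at x)"
    and B1: "(\<lambda>x. f x * (log 2 (f x))^2) integrable_on {alpha..beta}"
    and B2: "(\<lambda>x. f x * log 2 (f x)) integrable_on {alpha..beta}"
    and D: "D > 0"
  shows "3/2 * H_star f alpha beta D \<le> A_star f alpha beta D \<and>
    (\<forall>delta>0. distortion f (uni_n alpha beta delta) (uni_a alpha beta delta) (uni_c alpha beta delta) \<le> D
       \<longrightarrow> A_star f alpha beta D \<le>
           aoi f (uni_n alpha beta delta) (uni_a alpha beta delta) (shannon_code f (uni_a alpha beta delta)))"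
proof -
  note F = aoi_opt_facts[OF _ cont pdf_nonneg pdf_int]
  define SH where "SH = {out_entropy f n a | n a c. is_quantizer alpha beta n a \<and> distortion f n a c \<le> D}"
  define SA where "SA = {aoi_opt f n a | n a c. is_quantizer alpha beta n a \<and> distortion f n a c \<le> D}"
  have bSH: "bdd_below SH" unfolding SH_def bdd_below_def using F(2) by blast
  have bSA: "bdd_below SA"
  proof (rule bdd_belowI[where m=0])
    fix x assume "x \<in> SA"
    then obtain n a c where "is_quantizer alpha beta n a" "x = aoi_opt f n a" unfolding SA_def by blast
    then show "0 \<le> x" using F(1,2)[of n a] by simp
  qed
  obtain n0 a0 c0 where q0: "is_quantizer alpha beta n0 a0" "distortion f n0 a0 c0 \<le> D"
    using exists_quant[OF I cont pdf_nonneg pdf_int D] by blast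
  have neSA: "SA \<noteq> {}" unfolding SA_def using q0 by blast
  have part1: "3/2 * H_star f alpha beta D \<le> A_star f alpha beta D"
    unfolding A_star_def SA_def[symmetric]
  proof (rule cInf_greatest[OF neSA])
    fix x assume "x \<in> SA"
    then obtain n a c where q: "is_quantizer alpha beta n a" "distortion f n a c \<le> D" "x = aoi_opt f n a"
      unfolding SA_def by blast
    have "H_star f alpha beta D \<le> out_entropy f n a"
      unfolding H_star_def SH_def[symmetric] by (rule cInf_lower[OF _ bSH]) (use q SH_def in blast)
    then show "3/2 * H_star f alpha beta D \<le> x" using F(1)[OF q(1)] q(3) by simp
  qed
  have part2: "A_star f alpha beta D \<le>
           aoi f (uni_n alpha beta delta) (uni_a alpha beta delta) (shannon_code f (uni_a alpha beta delta))"
    if d: "delta > 0" and dD: "distortion f (uni_n alpha beta delta) (uni_a alpha beta delta) (uni_c alpha beta delta) \<le> D"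
    for delta
  proof -
    define n where "n = uni_n alpha beta delta"
    define a where "a = uni_a alpha beta delta"
    have q: "is_quantizer alpha beta n a" using uni_quant[OF I d] by (simp add: n_def a_def)
    have "A_star f alpha beta D \<le> aoi_opt f n a"
      unfolding A_star_def SA_def[symmetric] by (rule cInf_lower[OF _ bSA]) (use q dD SA_def n_def a_def in blast)
    moreover have "aoi_opt f n a \<le> aoi f n a (shannon_code f a)"
    proof (cases "n = 1")
      case True
      have s1: "cell_prob f a 0 = 1" using quant_sum[OF q cont pdf_int] True by simp
      have sh: "aoi f n a (shannon_code f a) = 0"
        using True s1 by (simp add: aoi_def EL_def EL2_def shannon_code_def)
      have "aoi_opt f n a \<le> 0"
      proof (rule ccontr)
        assume "\<not> ?thesis"
        then have m: "aoi_opt f n a > 0" by simp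
        define e where "e = aoi_opt f n a / 3"
        have e: "e > 0" using m by (simp add: e_def)
        have "2 powr (-e) \<le> 2 powr 0" by (rule powr_mono) (use e in auto)
        then have rc: "real_code n (\<lambda>_. e)" using True e by (simp add: real_code_def)
        have "aoi f n a (\<lambda>_. e) = 3/2 * e"
          using True s1 e by (simp add: aoi_def EL_def EL2_def power2_eq_square)
        moreover have "aoi_opt f n a \<le> aoi f n a (\<lambda>_. e)"
          unfolding aoi_opt_def by (rule cInf_lower[OF _ F(3)[OF q, unfolded aoi_opt_def]]) (use rc in blast)
        ultimately show False using m e_def by simp
      qed
      then show ?thesis using sh by simp
    next
      case False
      then have n2: "n \<ge> 2" using q by (simp add: is_quantizer_def)
      have pos: "\<And>i. i < n \<Longrightarrow> cell_prob f a i > 0"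
        using cell_pos[OF q cont pdf_nonneg _ support] by blast
      have s1: "(\<Sum>i<n. cell_prob f a i) = 1" by (rule quant_sum[OF q cont pdf_int])
      have lt1: "cell_prob f a i < 1" if i: "i < n" for i
      proof -
        define j where "j = (if i = 0 then 1 else (0::nat))"
        have j: "j < n" "j \<noteq> i" using n2 by (auto simp: j_def)
        have "(\<Sum>k\<in>{i,j}. cell_prob f a k) \<le> (\<Sum>k<n. cell_prob f a k)"
          by (rule sum_mono2) (use i j pos in \<open>auto intro: less_imp_le\<close>)
        then show ?thesis using j pos[OF j(1)] s1 by simp
      qed
      have rc: "real_code n (shannon_code f a)"
        unfolding real_code_def shannon_code_def
      proof
        show "\<forall>i<n. 0 < - log 2 (cell_prob f a i)" using pos lt1 by simp
        have "(\<Sum>i<n. 2 powr (- (- log 2 (cell_prob f a i)))) = (\<Sum>i<n. cell_prob f a i)"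
          by (rule sum.cong) (use pos in auto)
        then show "(\<Sum>i<n. 2 powr (- (- log 2 (cell_prob f a i)))) \<le> 1" using s1 by simp
      qed
      show ?thesis unfolding aoi_opt_def by (rule cInf_lower[OF _ F(3)[OF q]]) (use rc in blast)
    qed
    ultimately show ?thesis by (simp add: n_def a_def)
  qed
  show ?thesis using part1 part2 by blast
qed

end
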